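(* Let $A$ be a positive $2\times 2$ matrix that is not doubly stochastic. If the column scaled matrix $A\,Y(A)$ is doubly stochastic, then $A$ is of the form $A=\begin{pmatrix} a & ct\\ c & at\end{pmatrix}$ for some positive reals $a,c,t$, and \[ S(A)=A\,Y(A)=\begin{pmatrix} a/(a+c) & c/(a+c)\\ c/(a+c) & a/(a+c)\end{pmatrix}. \] If the row scaled matrix $X(A)\,A$ is doubly stochastic, then $A$ is of the form $A=\begin{pmatrix} a & b\\ bt & at\end{pmatrix}$ for some positive reals $a,b,t$, and \[ S(A)=X(A)\,A=\begin{pmatrix} a/(a+b) & b/(a+b)\\ b/(a+b) & a/(a+b)\end{pmatrix}. \]
   Context: A positive matrix has all entries positive. For an $n\times n$ matrix $A=(a_{i,j})$ let $\mathrm{row}_i(A)=\sum_j a_{i,j}$ and $\mathrm{col}_j(A)=\sum_i a_{i,j}$; $A$ is doubly stochastic if all row and column sums equal $1$. For positive $A$ let $X(A)=\mathrm{diag}(1/\mathrm{row}_1(A),\ldots,1/\mathrm{row}_n(A))$ (row scaling: $X(A)A$) and $Y(A)=\mathrm{diag}(1/\mathrm{col}_1(A),\ldots,1/\mathrm{col}_n(A))$ (column scaling: $AY(A)$). The alternate minimization sequence of $A$ is $A^{(0)}=A$, $A^{(2k+1)}=A^{(2k)}\,Y(A^{(2k)})$, $A^{(2k+2)}=X(A^{(2k+1)})\,A^{(2k+1)}$ ($k\ge 0$); its limit $S(A)=\lim_{\ell\to\infty}A^{(\ell)}$ is the alternate minimization (Sinkhorn) limit of $A$. *)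

theory Defs
  imports "HOL-Analysis.Analysis"
begin

definition positive_matrix :: "real^'n^'n \<Rightarrow> bool" where
  "positive_matrix A \<longleftrightarrow> (\<forall>i j. A $ i $ j > 0)"

definition row_sum :: "real^'n^'n \<Rightarrow> 'n \<Rightarrow> real" where
  "row_sum A i = (\<Sum>j\<in>UNIV. A $ i $ j)"

definition col_sum :: "real^'n^'n \<Rightarrow> 'n \<Rightarrow> real" where
  "col_sum A j = (\<Sum>i\<in>UNIV. A $ i $ j)"

definition doubly_stochastic :: "real^'n^'n \<Rightarrow> bool" where
  "doubly_stochastic A \<longleftrightarrow> (\<forall>i. row_sum A i = 1) \<and> (\<forall>j. col_sum A j = 1)"

definition diag_mat :: "('n \<Rightarrow> real) \<Rightarrow> real^'n^'n" where
  "diag_mat d = (\<chi> i j. if i = j then d i else 0)"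

definition Xs :: "real^'n^'n \<Rightarrow> real^'n^'n" where
  "Xs A = diag_mat (\<lambda>i. 1 / row_sum A i)"

definition Ys :: "real^'n^'n \<Rightarrow> real^'n^'n" where
  "Ys A = diag_mat (\<lambda>j. 1 / col_sum A j)"

fun alt_min_seq :: "real^'n^'n \<Rightarrow> nat \<Rightarrow> real^'n^'n" where
  "alt_min_seq A 0 = A"
| "alt_min_seq A (Suc l) =
     (let B = alt_min_seq A l in if even l then B ** Ys B else Xs B ** B)"

definition sinkhorn_limit :: "real^'n^'n \<Rightarrow> real^'n^'n" where
  "sinkhorn_limit A = lim (alt_min_seq A)"

end

theory Submission
  imports Defs
begin

definition mk2 :: "real \<Rightarrow> real \<Rightarrow> real \<Rightarrow> real \<Rightarrow> real^2^2" where
  "mk2 p q r s = (\<chi> i j. if i = 1 then (if j = 1 then p else q) else (if j = 1 then r else s))"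

lemma mk2_nth[simp]:
  "mk2 p q r s $ 1 $ 1 = p" "mk2 p q r s $ 1 $ 2 = q"
  "mk2 p q r s $ 2 $ 1 = r" "mk2 p q r s $ 2 $ 2 = s"
  by (simp_all add: mk2_def)

lemma mat2_eq_iff: "(M::real^2^2) = N \<longleftrightarrow>
   M$1$1 = N$1$1 \<and> M$1$2 = N$1$2 \<and> M$2$1 = N$2$1 \<and> M$2$2 = N$2$2"
  by (auto simp: vec_eq_iff forall_2)

lemma diag_left: "(diag_mat d ** B) $ i $ j = d i * B $ i $ j"
proof -
  have "(\<Sum>k\<in>UNIV. (if i = k then d i else 0) * B $ k $ j) = (\<Sum>k\<in>UNIV. if i = k then d i * B $ i $ j else 0)"
    by (rule sum.cong) auto
  then show ?thesis unfolding matrix_matrix_mult_def diag_mat_def by simp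
qed

lemma diag_right: "(B ** diag_mat d) $ i $ j = B $ i $ j * d j"
proof -
  have "(\<Sum>k\<in>UNIV. B $ i $ k * (if k = j then d k else 0)) = (\<Sum>k\<in>UNIV. if k = j then B $ i $ j * d j else 0)"
    by (rule sum.cong) auto
  then show ?thesis unfolding matrix_matrix_mult_def diag_mat_def by simp
qed

lemma Xs_mult2: "Xs (B::real^2^2) ** B =
  mk2 (B$1$1/(B$1$1+B$1$2)) (B$1$2/(B$1$1+B$1$2)) (B$2$1/(B$2$1+B$2$2)) (B$2$2/(B$2$1+B$2$2))"
  unfolding mat2_eq_iff Xs_def diag_left row_sum_def sum_2 by simp

lemma Ys_mult2: "(B::real^2^2) ** Ys B =
  mk2 (B$1$1/(B$1$1+B$2$1)) (B$1$2/(B$1$2+B$2$2)) (B$2$1/(B$1$1+B$2$1)) (B$2$2/(B$1$2+B$2$2))"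
  unfolding mat2_eq_iff Ys_def diag_right col_sum_def sum_2 by simp

lemma ds2: "doubly_stochastic (B::real^2^2) \<longleftrightarrow>
   B$1$1 + B$1$2 = 1 \<and> B$2$1 + B$2$2 = 1 \<and> B$1$1 + B$2$1 = 1 \<and> B$1$2 + B$2$2 = 1"
  unfolding doubly_stochastic_def row_sum_def col_sum_def sum_2 forall_2 by simp

lemma ds_fix: assumes "doubly_stochastic (B::real^2^2)"
  shows "Xs B ** B = B" "B ** Ys B = B"
  using assms unfolding ds2 Xs_mult2 Ys_mult2 mat2_eq_iff by simp_all

lemma A_as_mk2: "(A::real^2^2) = mk2 (A$1$1) (A$1$2) (A$2$1) (A$2$2)"
  unfolding mat2_eq_iff by simp

definition Cm :: "real \<Rightarrow> real \<Rightarrow> real \<Rightarrow> real^2^2" where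
  "Cm a b r = mk2 (a/(a+r*b)) (b/(b+r*a)) (r*b/(a+r*b)) (r*a/(b+r*a))"
definition Rm :: "real \<Rightarrow> real \<Rightarrow> real \<Rightarrow> real^2^2" where
  "Rm a b u = mk2 (a / (a + b * u)) (b * u / (a + b * u)) (b / (b + a * u)) (a * u / (b + a * u))"
definition ff :: "real \<Rightarrow> real \<Rightarrow> real \<Rightarrow> real" where
  "ff a b r = (a + r*b)/(b + r*a)"

lemma ff_pos: "a > 0 \<Longrightarrow> b > 0 \<Longrightarrow> r > 0 \<Longrightarrow> ff a b r > 0"
  unfolding ff_def by (intro divide_pos_pos add_pos_pos mult_pos_pos) auto

lemma G1: "(D1::real) > 0 \<Longrightarrow> D2 > 0 \<Longrightarrow> p*D2+q*D1 > 0 \<Longrightarrow>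
  (p/D1)/(p/D1+q/D2) = p*D2/(p*D2+q*D1)"
  by (simp add: field_simps)
lemma G2: "(D1::real) > 0 \<Longrightarrow> D2 > 0 \<Longrightarrow> p*D2+q*D1 > 0 \<Longrightarrow>
  (q/D2)/(p/D1+q/D2) = q*D1/(p*D2+q*D1)"
  by (simp add: field_simps)
lemma div_eq_div: "(Y::real) > 0 \<Longrightarrow> W > 0 \<Longrightarrow> X*W = Z*Y \<Longrightarrow> X/Y = Z/W"
  by (simp add: field_simps)

lemma step_X: assumes a: "a > 0" and b: "b > 0" and r: "r > 0"
  shows "Xs (Cm a b r) ** Cm a b r = Rm a b (ff a b r)"
proof -
  have p1: "a + r*b > 0" "b + r*a > 0" using a b r by (simp_all add: add_pos_pos)
  have u: "ff a b r > 0" using ff_pos a b r by blast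
  have p2: "a + b * ff a b r > 0" "b + a * ff a b r > 0" using a b u by (simp_all add: add_pos_pos)
  have q1: "a*(b+r*a) + b*(a+r*b) > 0" "r*b*(b+r*a) + r*a*(a+r*b) > 0"
    using a b r p1 by (simp_all add: add_pos_pos)
  have e11: "(a/(a+r*b))/(a/(a+r*b)+b/(b+r*a)) = a*(b+r*a)/(a*(b+r*a) + b*(a+r*b))"
    by (rule G1) (use p1 q1 in auto)
  have e12: "(b/(b+r*a))/(a/(a+r*b)+b/(b+r*a)) = b*(a+r*b)/(a*(b+r*a) + b*(a+r*b))"
    by (rule G2) (use p1 q1 in auto)
  have e21: "(r*b/(a+r*b))/(r*b/(a+r*b)+r*a/(b+r*a)) = r*b*(b+r*a)/(r*b*(b+r*a) + r*a*(a+r*b))"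
    by (rule G1) (use p1 q1 in auto)
  have e22: "(r*a/(b+r*a))/(r*b/(a+r*b)+r*a/(b+r*a)) = r*a*(a+r*b)/(r*b*(b+r*a) + r*a*(a+r*b))"
    by (rule G2) (use p1 q1 in auto)
  have f11: "a / (a + b * ff a b r) = a*(b+r*a)/(a*(b+r*a) + b*(a+r*b))"
    using p1 p2 q1 unfolding ff_def by (intro div_eq_div) (auto simp: field_simps)
  have f12: "b * ff a b r / (a + b * ff a b r) = b*(a+r*b)/(a*(b+r*a) + b*(a+r*b))"
    using p1 p2 q1 unfolding ff_def by (intro div_eq_div) (auto simp: field_simps)
  have f21: "b / (b + a * ff a b r) = r*b*(b+r*a)/(r*b*(b+r*a) + r*a*(a+r*b))"
    using p1 p2 q1 unfolding ff_def by (intro div_eq_div) (auto simp: field_simps)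
  have f22: "a * ff a b r / (b + a * ff a b r) = r*a*(a+r*b)/(r*b*(b+r*a) + r*a*(a+r*b))"
    using p1 p2 q1 unfolding ff_def by (intro div_eq_div) (auto simp: field_simps)
  show ?thesis
    unfolding Xs_mult2 Cm_def Rm_def mat2_eq_iff mk2_nth
    using e11 e12 e21 e22 f11 f12 f21 f22 by simp
qed

lemma step_Y: assumes a: "a > 0" and b: "b > 0" and r: "r > 0"
  shows "Rm a b r ** Ys (Rm a b r) = Cm a b (ff a b r)"
proof -
  have p1: "a + b*r > 0" "b + a*r > 0" using a b r by (simp_all add: add_pos_pos)
  have u: "ff a b r > 0" using ff_pos a b r by blast
  have p2: "a + ff a b r * b > 0" "b + ff a b r * a > 0" using a b u by (simp_all add: add_pos_pos)
  have q1: "a*(b+a*r) + b*(a+b*r) > 0" "b*r*(b+a*r) + a*r*(a+b*r) > 0"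
    using a b r p1 by (simp_all add: add_pos_pos)
  have e11: "(a/(a+b*r))/(a/(a+b*r)+b/(b+a*r)) = a*(b+a*r)/(a*(b+a*r) + b*(a+b*r))"
    by (rule G1) (use p1 q1 in auto)
  have e21: "(b/(b+a*r))/(a/(a+b*r)+b/(b+a*r)) = b*(a+b*r)/(a*(b+a*r) + b*(a+b*r))"
    by (rule G2) (use p1 q1 in auto)
  have e12: "(b*r/(a+b*r))/(b*r/(a+b*r)+a*r/(b+a*r)) = b*r*(b+a*r)/(b*r*(b+a*r) + a*r*(a+b*r))"
    by (rule G1) (use p1 q1 in auto)
  have e22: "(a*r/(b+a*r))/(b*r/(a+b*r)+a*r/(b+a*r)) = a*r*(a+b*r)/(b*r*(b+a*r) + a*r*(a+b*r))"
    by (rule G2) (use p1 q1 in auto)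
  have f11: "a / (a + ff a b r * b) = a*(b+a*r)/(a*(b+a*r) + b*(a+b*r))"
    using p1 p2 q1 unfolding ff_def by (intro div_eq_div) (auto simp: field_simps)
  have f21: "ff a b r * b / (a + ff a b r * b) = b*(a+b*r)/(a*(b+a*r) + b*(a+b*r))"
    using p1 p2 q1 unfolding ff_def by (intro div_eq_div) (auto simp: field_simps)
  have f12: "b / (b + ff a b r * a) = b*r*(b+a*r)/(b*r*(b+a*r) + a*r*(a+b*r))"
    using p1 p2 q1 unfolding ff_def by (intro div_eq_div) (auto simp: field_simps)
  have f22: "ff a b r * a / (b + ff a b r * a) = a*r*(a+b*r)/(b*r*(b+a*r) + a*r*(a+b*r))"
    using p1 p2 q1 unfolding ff_def by (intro div_eq_div) (auto simp: field_simps)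
  show ?thesis
    unfolding Ys_mult2 Cm_def Rm_def mat2_eq_iff mk2_nth
    using e11 e12 e21 e22 f11 f12 f21 f22 by simp
qed

lemma iter_pos: "a > 0 \<Longrightarrow> b > 0 \<Longrightarrow> t > 0 \<Longrightarrow> (ff a b ^^ n) t > 0"
  by (induction n) (auto intro: ff_pos)

lemma seq_form:
  assumes a: "a > 0" and b: "b > 0" and t: "t > 0" and A: "A = mk2 a b (b*t) (a*t)"
  shows "alt_min_seq A (Suc n) =
    (if even n then Cm a b ((ff a b ^^ n) t) else Rm a b ((ff a b ^^ n) t))"
proof (induction n)
  case 0
  show ?case using A by (simp add: Let_def Ys_mult2 Cm_def mult.commute)
next
  case (Suc n)
  have pos: "(ff a b ^^ n) t > 0" using iter_pos a b t by blast
  show ?case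
  proof (cases "even n")
    case True
    then show ?thesis using Suc pos step_X[OF a b pos] by (simp add: Let_def)
  next
    case False
    then show ?thesis using Suc pos step_Y[OF a b pos] by (simp add: Let_def)
  qed
qed

lemma g_step: assumes a: "a > 0" and b: "b > 0" and r: "r > 0"
  shows "(1 - ff a b r) / (1 + ff a b r) = ((b - a)/(a + b)) * ((1 - r)/(1 + r))"
proof -
  have p: "b + r*a > 0" "a + b > 0" "1 + r > 0" using a b r by (simp_all add: add_pos_pos)
  have h1: "1 - ff a b r = (b-a)*(1-r)/(b+r*a)" using p unfolding ff_def
    by (simp add: field_simps; simp add: algebra_simps)
  have h2: "1 + ff a b r = (a+b)*(1+r)/(b+r*a)" using p unfolding ff_def
    by (simp add: field_simps; simp add: algebra_simps)
  have c: "x/D/(y/D) = x/y" if "(D::real) \<noteq> 0" for x y D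
    using that by (cases "y = 0") (simp_all add: field_simps)
  show ?thesis unfolding h1 h2 c[OF less_imp_neq[OF p(1), symmetric]] times_divide_times_eq ..
qed

lemma iter_lim: assumes a: "a > 0" and b: "b > 0" and t: "t > 0"
  shows "(\<lambda>n. (ff a b ^^ n) t) \<longlonglongrightarrow> 1"
proof -
  define k where "k = (b - a)/(a + b)"
  define g0 where "g0 = (1 - t)/(1 + t)"
  have gn: "(1 - (ff a b ^^ n) t)/(1 + (ff a b ^^ n) t) = k^n * g0" for n
  proof (induction n)
    case 0 then show ?case by (simp add: g0_def)
  next
    case (Suc n)
    have "(ff a b ^^ n) t > 0" using iter_pos a b t by blast
    then show ?case using g_step[OF a b, of "(ff a b ^^ n) t"] Suc by (simp add: k_def)
  qed
  have inv: "(ff a b ^^ n) t = (1 - k^n * g0)/(1 + k^n * g0)" for n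
  proof -
    have p: "(ff a b ^^ n) t > 0" using iter_pos a b t by blast
    show ?thesis unfolding gn[symmetric] using p by (simp add: field_simps)
  qed
  have kk: "norm k < 1" using a b unfolding k_def by (simp add: abs_less_iff field_simps)
  have "(\<lambda>n. (1 - k^n * g0)/(1 + k^n * g0)) \<longlonglongrightarrow> (1 - 0 * g0)/(1 + 0 * g0)"
    by (intro tendsto_intros LIMSEQ_power_zero kk) simp
  then show ?thesis unfolding inv by simp
qed

lemma mk2_tendsto:
  assumes "(p \<longlongrightarrow> p0) F" "(q \<longlongrightarrow> q0) F" "(r \<longlongrightarrow> r0) F" "(s \<longlongrightarrow> s0) F"
  shows "((\<lambda>x. mk2 (p x) (q x) (r x) (s x)) \<longlongrightarrow> mk2 p0 q0 r0 s0) F"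
proof (rule vec_tendstoI, rule vec_tendstoI)
  fix i j :: 2
  show "((\<lambda>x. mk2 (p x) (q x) (r x) (s x) $ i $ j) \<longlongrightarrow> mk2 p0 q0 r0 s0 $ i $ j) F"
    using assms exhaust_2[of i] exhaust_2[of j] by auto
qed

lemma tendsto_if_both:
  assumes "(u \<longlongrightarrow> L) F" "(v \<longlongrightarrow> L) F"
  shows "((\<lambda>n. if P n then u n else v n) \<longlongrightarrow> L) F"
proof (rule topological_tendstoI)
  fix S assume S: "open S" "L \<in> S"
  have "eventually (\<lambda>n. u n \<in> S) F" "eventually (\<lambda>n. v n \<in> S) F"
    using assms S by (auto intro: topological_tendstoD)
  then show "eventually (\<lambda>n. (if P n then u n else v n) \<in> S) F"
    by eventually_elim simp
qed

lemma part1: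
  fixes A :: "real^2^2"
  assumes pos: "positive_matrix A" and ds: "doubly_stochastic (A ** Ys A)"
  shows "\<exists>a c t. a > 0 \<and> c > 0 \<and> t > 0 \<and>
               A $ 1 $ 1 = a \<and> A $ 1 $ 2 = c * t \<and> A $ 2 $ 1 = c \<and> A $ 2 $ 2 = a * t \<and>
               alt_min_seq A \<longlonglongrightarrow> A ** Ys A \<and>
               sinkhorn_limit A = A ** Ys A \<and>
               A ** Ys A = (\<chi> i j. if i = j then a / (a + c) else c / (a + c))"
proof -
  define p q r s where "p = A$1$1" "q = A$1$2" "r = A$2$1" "s = A$2$2"
  have pp: "p > 0" "q > 0" "r > 0" "s > 0" using pos unfolding positive_matrix_def p_q_r_s_def by auto
  have "p/(p+r) + q/(q+s) = 1" using ds unfolding ds2 Ys_mult2 p_q_r_s_def by simp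
  then have key: "p * q = r * s" using pp by (simp add: field_simps)
  have seq: "alt_min_seq A (Suc n) = A ** Ys A" for n
  proof (induction n)
    case 0 then show ?case by simp
  next
    case (Suc n)
    then show ?case using ds_fix[OF ds] by (simp add: Let_def)
  qed
  have lim: "alt_min_seq A \<longlonglongrightarrow> A ** Ys A"
    by (rule LIMSEQ_imp_Suc) (simp only: seq tendsto_const)
  have t: "q/r > 0" using pp by simp
  have e1: "A $ 1 $ 2 = r * (q/r)" using pp p_q_r_s_def by simp
  have "p * (q/r) = p * q / r" by simp
  also have "\<dots> = r * s / r" using key by simp
  also have "\<dots> = s" using pp by simp
  finally have e2: "A $ 2 $ 2 = p * (q/r)" using p_q_r_s_def by simp
  have e3: "q/(q+s) = r/(p+r)"
  proof (rule div_eq_div)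
    show "q + s > 0" "p + r > 0" using pp by simp_all
    have "q * (p + r) = p * q + q * r" by (simp add: algebra_simps)
    also have "\<dots> = r * s + q * r" using key by simp
    also have "\<dots> = r * (q + s)" by (simp add: algebra_simps)
    finally show "q * (p + r) = r * (q + s)" .
  qed
  have e4: "s/(q+s) = p/(p+r)"
  proof (rule div_eq_div)
    show "q + s > 0" "p + r > 0" using pp by simp_all
    have "s * (p + r) = s * p + r * s" by (simp add: algebra_simps)
    also have "\<dots> = s * p + p * q" using key by simp
    also have "\<dots> = p * (q + s)" by (simp add: algebra_simps)
    finally show "s * (p + r) = p * (q + s)" .
  qed
  have mat: "A ** Ys A = (\<chi> i j. if i = j then p / (p + r) else r / (p + r))"
    unfolding mat2_eq_iff Ys_mult2 mk2_nth using e3 e4 by (simp add: p_q_r_s_def)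
  show ?thesis
    apply (rule exI[of _ p], rule exI[of _ r], rule exI[of _ "q/r"])
    unfolding sinkhorn_limit_def using pp t e1 e2 lim mat limI[OF lim] p_q_r_s_def by blast
qed

lemma part2:
  fixes A :: "real^2^2"
  assumes pos: "positive_matrix A" and ds: "doubly_stochastic (Xs A ** A)"
  shows "\<exists>a b t. a > 0 \<and> b > 0 \<and> t > 0 \<and>
               A $ 1 $ 1 = a \<and> A $ 1 $ 2 = b \<and> A $ 2 $ 1 = b * t \<and> A $ 2 $ 2 = a * t \<and>
               alt_min_seq A \<longlonglongrightarrow> Xs A ** A \<and>
               sinkhorn_limit A = Xs A ** A \<and>
               Xs A ** A = (\<chi> i j. if i = j then a / (a + b) else b / (a + b))"
proof -
  define p q r s where "p = A$1$1" "q = A$1$2" "r = A$2$1" "s = A$2$2"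
  have pp: "p > 0" "q > 0" "r > 0" "s > 0" using pos unfolding positive_matrix_def p_q_r_s_def by auto
  have "p/(p+q) + r/(r+s) = 1" using ds unfolding ds2 Xs_mult2 p_q_r_s_def by simp
  then have key: "p * r = q * s" using pp by (simp add: field_simps)
  define t where "t = r/q"
  have t: "t > 0" using pp t_def by simp
  have e1: "A $ 2 $ 1 = q * t" using pp p_q_r_s_def t_def by simp
  have "p * t = p * r / q" by (simp add: t_def)
  also have "\<dots> = q * s / q" using key by simp
  also have "\<dots> = s" using pp by simp
  finally have e2: "A $ 2 $ 2 = p * t" using p_q_r_s_def by simp
  have Aeq: "A = mk2 p q (q*t) (p*t)" using e1 e2 unfolding mat2_eq_iff p_q_r_s_def by simp
  define T where "T = mk2 (p/(p+q)) (q/(p+q)) (q/(p+q)) (p/(p+q))"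
  have x1: "q*t/(q*t+p*t) = q/(p+q)"
  proof -
    have "q*t/(q*t+p*t) = (q*t)/((p+q)*t)" by (simp add: algebra_simps)
    also have "\<dots> = q/(p+q)" using t by simp
    finally show ?thesis .
  qed
  have x2: "p*t/(q*t+p*t) = p/(p+q)"
  proof -
    have "p*t/(q*t+p*t) = (p*t)/((p+q)*t)" by (simp add: algebra_simps)
    also have "\<dots> = p/(p+q)" using t by simp
    finally show ?thesis .
  qed
  have XA: "Xs A ** A = T" unfolding T_def Aeq Xs_mult2 mk2_nth x1 x2 ..
  have h: "(\<lambda>n. (ff p q ^^ n) t) \<longlonglongrightarrow> 1" using iter_lim pp t by blast
  have C: "(\<lambda>n. Cm p q ((ff p q ^^ n) t)) \<longlonglongrightarrow> T"
  proof -
    have "(\<lambda>n. Cm p q ((ff p q ^^ n) t)) \<longlonglongrightarrow> Cm p q 1"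
      unfolding Cm_def using pp by (intro mk2_tendsto tendsto_divide tendsto_add tendsto_mult tendsto_const h) simp_all
    moreover have "Cm p q 1 = T" unfolding Cm_def T_def by (simp add: add.commute)
    ultimately show ?thesis by simp
  qed
  have R: "(\<lambda>n. Rm p q ((ff p q ^^ n) t)) \<longlonglongrightarrow> T"
  proof -
    have "(\<lambda>n. Rm p q ((ff p q ^^ n) t)) \<longlonglongrightarrow> Rm p q 1"
      unfolding Rm_def using pp by (intro mk2_tendsto tendsto_divide tendsto_add tendsto_mult tendsto_const h) simp_all
    moreover have "Rm p q 1 = T" unfolding Rm_def T_def by (simp add: add.commute)
    ultimately show ?thesis by simp
  qed
  have "(\<lambda>n. alt_min_seq A (Suc n)) \<longlonglongrightarrow> T"
    unfolding seq_form[OF pp(1) pp(2) t Aeq] by (rule tendsto_if_both[OF C R])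
  then have lim: "alt_min_seq A \<longlonglongrightarrow> Xs A ** A" unfolding XA by (rule LIMSEQ_imp_Suc)
  have mat: "Xs A ** A = (\<chi> i j. if i = j then p / (p + q) else q / (p + q))"
    unfolding XA T_def mat2_eq_iff by simp
  show ?thesis
    apply (rule exI[of _ p], rule exI[of _ q], rule exI[of _ t])
    unfolding sinkhorn_limit_def using pp t e1 e2 lim mat limI[OF lim] p_q_r_s_def by blast
qed

theorem theorem7:
  fixes A :: "real^2^2"
  assumes pos: "positive_matrix A"
    and nds: "\<not> doubly_stochastic A"
  shows "(doubly_stochastic (A ** Ys A) \<longrightarrow>
            (\<exists>a c t. a > 0 \<and> c > 0 \<and> t > 0 \<and>
               A $ 1 $ 1 = a \<and> A $ 1 $ 2 = c * t \<and> A $ 2 $ 1 = c \<and> A $ 2 $ 2 = a * t \<and>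
               alt_min_seq A \<longlonglongrightarrow> A ** Ys A \<and>
               sinkhorn_limit A = A ** Ys A \<and>
               A ** Ys A = (\<chi> i j. if i = j then a / (a + c) else c / (a + c))))
       \<and> (doubly_stochastic (Xs A ** A) \<longrightarrow>
            (\<exists>a b t. a > 0 \<and> b > 0 \<and> t > 0 \<and>
               A $ 1 $ 1 = a \<and> A $ 1 $ 2 = b \<and> A $ 2 $ 1 = b * t \<and> A $ 2 $ 2 = a * t \<and>
               alt_min_seq A \<longlonglongrightarrow> Xs A ** A \<and>
               sinkhorn_limit A = Xs A ** A \<and>
               Xs A ** A = (\<chi> i j. if i = j then a / (a + b) else b / (a + b))))"
  using part1[OF pos] part2[OF pos] by blast

end
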